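(* Let $x\in\mathbb{R}^n_{++}$ and $y\in\mathbb{R}^n_+$ with $D_h(x,y)<\infty$. Then $$y_{\min}\ge -x_{\min}\,W_0\!\left(-\exp\!\left(-1-\frac{D_h(x,y)}{x_{\min}}\right)\right),$$ where $x_{\min}=\min_i x_i$ and $y_{\min}=\min_i y_i$.
   Context: $D_h(x,y)=\sum_i\big(x_i\log\frac{x_i}{y_i}-x_i+y_i\big)$ (Bregman divergence of $h(x)=\sum_i x_i(\log x_i-1)$), which is $+\infty$ if some $y_i=0$. $W_0$ is the principal branch of the Lambert $W$ function. *)

theory Defs
  imports "HOL-Analysis.Analysis"
begin

text \<open>Principal branch W_0 of the Lambert W function on [-1/e, \<infinity>):
  the unique w \<ge> -1 with w * exp w = z.\<close>
definition lambert_W0 :: "real \<Rightarrow> real" where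
  "lambert_W0 z = (THE w. w \<ge> -1 \<and> w * exp w = z)"

text \<open>Bregman divergence of h(x) = sum_i x_i (log x_i - 1); +\<infinity> if some y_i = 0.\<close>
definition bregman_ent :: "real ^ 'n \<Rightarrow> real ^ 'n \<Rightarrow> ereal" where
  "bregman_ent x y =
     (if \<exists>i. y $ i = 0 then \<infinity>
      else ereal (\<Sum>i\<in>UNIV. x $ i * ln (x $ i / y $ i) - x $ i + y $ i))"

definition vmin :: "real ^ 'n \<Rightarrow> real" where
  "vmin x = Min (range (\<lambda>i. x $ i))"

end

theory Submission
  imports Defs
begin

lemma ln_strict: fixes x :: real assumes "0 < x" "x \<noteq> 1" shows "ln x < x - 1"
proof -
  have s: "sqrt x > 0" "sqrt x \<noteq> 1" using assms by auto
  have "ln x = 2 * ln (sqrt x)" using assms by (simp add: ln_sqrt)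
  also have "\<dots> \<le> 2 * (sqrt x - 1)" using ln_le_minus_one[OF s(1)] by simp
  also have "\<dots> < x - 1"
  proof -
    have "(sqrt x - 1)^2 > 0" using s by simp
    thus ?thesis using assms by (simp add: power2_eq_square algebra_simps)
  qed
  finally show ?thesis .
qed

lemma wexp_mono: fixes v w :: real assumes "-1 \<le> v" "v < w" shows "v * exp v < w * exp w"
proof -
  define d where "d = w - v"
  have d: "d > 0" using assms d_def by simp
  have "w = v + d" using d_def by simp
  hence ew: "exp w = exp v * exp d" by (simp add: exp_add)
  have "v < w * exp d"
  proof (cases "w \<ge> 0")
    case True
    have "exp d \<ge> 1" using d by simp
    hence "w * exp d \<ge> w" using True by (simp add: mult_le_cancel_left1)
    thus ?thesis using assms by simp
  next
    case False
    have "exp (-d) > 1 - d" using ln_strict[of "exp (-d)"] d by simp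
    hence "exp (-d) * exp d > (1 - d) * exp d" by simp
    hence a: "1 > (1-d) * exp d" by (simp add: exp_minus field_simps)
    have e1: "exp d - 1 \<ge> 0" using d by simp
    have "v * (exp d - 1) \<ge> (-1) * (exp d - 1)" by (rule mult_right_mono[OF assms(1) e1])
    hence "v * (exp d - 1) + d * exp d > 0" using a by (simp add: algebra_simps)
    moreover have "w * exp d = v * exp d + d * exp d" proof - have "w = v + d" using d_def by simp thus ?thesis by (simp add: distrib_right) qed
    moreover have "v * (exp d - 1) = v * exp d - v" by (simp add: right_diff_distrib)
    ultimately show ?thesis by linarith
  qed
  hence l: "v * exp v < (w * exp d) * exp v" by simp
  have "w * exp w = (w * exp d) * exp v" unfolding ew by (simp add: mult_ac)
  thus ?thesis using l by linarith
qed

lemma W0_prop: fixes z :: real assumes "- exp (-1) \<le> z" "z \<le> 0"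
  shows "lambert_W0 z \<ge> -1 \<and> lambert_W0 z * exp (lambert_W0 z) = z"
proof -
  have "\<exists>w. -1 \<le> w \<and> w \<le> 0 \<and> w * exp w = z"
  proof -
    have c: "continuous_on {-1..0} (\<lambda>w::real. w * exp w)" by (intro continuous_intros)
    have h1: "(\<lambda>w::real. w * exp w) (-1) \<le> z" using assms by simp
    have h2: "z \<le> (\<lambda>w::real. w * exp w) 0" using assms by simp
    have h3: "(-1::real) \<le> 0" by simp
    show ?thesis using IVT'[OF h1 h2 h3 c] by blast
  qed
  then obtain w where w: "w \<ge> -1" "w * exp w = z" by auto
  have u: "\<And>v. v \<ge> -1 \<and> v * exp v = z \<Longrightarrow> v = w"
  proof -
    fix v assume v: "v \<ge> -1 \<and> v * exp v = z"
    show "v = w"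
    proof (rule ccontr)
      assume "v \<noteq> w"
      hence "v < w \<or> w < v" by linarith
      thus False
      proof
        assume "v < w" thus False using wexp_mono[of v w] v w by linarith
      next
        assume "w < v" thus False using wexp_mono[of w v] v w by linarith
      qed
    qed
  qed
  have "lambert_W0 z = w" unfolding lambert_W0_def
  proof (rule the_equality)
    show "-1 \<le> w \<and> w * exp w = z" using w by simp
  next
    fix v assume "-1 \<le> v \<and> v * exp v = z" thus "v = w" by (rule u)
  qed
  thus ?thesis using w by simp
qed

lemma ln_ge_one_minus: fixes t :: real assumes "t > 0" shows "ln t \<ge> 1 - 1/t"
  using ln_le_minus_one[of "1/t"] assms by (simp add: ln_div)

lemma key_ineq: fixes a b c :: real assumes "0 < b" "b \<le> a" "a \<le> c"
  shows "b - a - a * ln (b / a) \<le> c * ln (c / b) - c + b"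
proof -
  have a0: "a > 0" using assms by simp
  have c0: "c > 0" using assms by simp
  have "ln (c/a) \<ge> 1 - a/c" using ln_ge_one_minus[of "c/a"] assms a0 by simp
  hence "c * ln (c/a) \<ge> c * (1 - a/c)" using c0 by (simp add: mult_left_mono)
  moreover have "c * (1 - a/c) = c - a" using c0 by (simp add: right_diff_distrib)
  ultimately have h1: "c * ln (c/a) \<ge> c - a" by simp
  have la: "ln (a/b) \<ge> 0" using assms by simp
  have h2: "c * ln (a/b) \<ge> a * ln (a/b)" using mult_right_mono[OF assms(3) la] .
  have e1: "ln (c/b) = ln (c/a) + ln (a/b)" using assms a0 by (simp add: ln_div)
  have e2: "ln (b/a) = - ln (a/b)" using assms a0 by (simp add: ln_div)
  have e3: "c * ln (c/b) = c * ln (c/a) + c * ln (a/b)" unfolding e1 by (simp add: distrib_left)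
  have e4: "a * ln (b/a) = - (a * ln (a/b))" unfolding e2 by simp
  show ?thesis using h1 h2 e3 e4 by linarith
qed

lemma phi_strict: fixes s u :: real assumes "0 < s" "s < u" "u \<le> 1"
  shows "s - ln s > u - ln u"
proof -
  have u0: "u > 0" using assms by simp
  have "ln (s/u) < s/u - 1" using ln_strict[of "s/u"] assms u0 by simp
  hence "ln u - ln s > 1 - s/u" using assms u0 by (simp add: ln_div)
  moreover have "1 - s/u \<ge> u - s"
  proof -
    have "(u - s) * (1 - u) \<ge> 0" using assms by simp
    hence "(u - s) * u \<le> u - s" by (simp add: right_diff_distrib)
    hence "u - s \<le> (u - s) / u" using u0 by (simp add: pos_le_divide_eq)
    moreover have "(u - s) / u = 1 - s/u" using u0 by (simp add: diff_divide_distrib)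
    ultimately show ?thesis by simp
  qed
  ultimately show ?thesis by simp
qed

theorem lemmaB3:
  fixes x y :: "real ^ 'n"
  assumes "\<forall>i. x $ i > 0"
    and "\<forall>i. y $ i \<ge> 0"
    and "bregman_ent x y < \<infinity>"
  shows "vmin y \<ge> - vmin x *
           lambert_W0 (- exp (-1 - real_of_ereal (bregman_ent x y) / vmin x))"
proof -
  define a where "a = vmin x"
  define b where "b = vmin y"
  have fin: "finite (range (\<lambda>i. x $ i))" "finite (range (\<lambda>i. y $ i))" by auto
  have ne: "range (\<lambda>i. x $ i) \<noteq> {}" "range (\<lambda>i. y $ i) \<noteq> {}" by auto
  have "a \<in> range (\<lambda>i. x $ i)" unfolding a_def vmin_def using fin(1) by (rule Min_in) auto
  then obtain k where k: "a = x $ k" by blast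
  have "b \<in> range (\<lambda>i. y $ i)" unfolding b_def vmin_def using fin(2) by (rule Min_in) auto
  then obtain j where j: "b = y $ j" by blast
  have ale: "\<And>i. a \<le> x $ i" unfolding a_def vmin_def using fin(1) by (intro Min_le) auto
  have a0: "a > 0" using k assms(1) by simp
  have ynz: "\<And>i. y $ i \<noteq> 0" using assms(3) unfolding bregman_ent_def by (auto split: if_splits)
  have ypos: "\<And>i. y $ i > 0" using ynz assms(2) by (metis less_eq_real_def)
  define dd where "dd = (\<lambda>i. x $ i * ln (x $ i / y $ i) - x $ i + y $ i)"
  define D where "D = (\<Sum>i\<in>UNIV. dd i)"
  have bD: "bregman_ent x y = ereal D" unfolding bregman_ent_def D_def dd_def using ynz by auto
  have rD: "real_of_ereal (bregman_ent x y) = D" using bD by simp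
  have dnn: "\<And>i. dd i \<ge> 0"
  proof -
    fix i
    have xi: "x $ i > 0" using assms(1) by simp
    have yi: "y $ i > 0" using ypos by simp
    have "ln (x $ i / y $ i) \<ge> 1 - y $ i / x $ i"
      using ln_ge_one_minus[of "x $ i / y $ i"] xi yi by simp
    hence "x $ i * ln (x $ i / y $ i) \<ge> x $ i * (1 - y $ i / x $ i)" using xi by (simp add: mult_left_mono)
    moreover have "x $ i * (1 - y $ i / x $ i) = x $ i - y $ i" using xi by (simp add: right_diff_distrib)
    ultimately show "dd i \<ge> 0" unfolding dd_def by simp
  qed
  have Dj: "dd j \<le> D" unfolding D_def by (rule member_le_sum) (use dnn in auto)
  have D0: "D \<ge> 0" using Dj dnn[of j] by simp
  define z where "z = - exp (-1 - D / a)"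
  have "D / a \<ge> 0" using D0 a0 by simp
  hence "exp (-1 - D / a) \<le> exp (-1)" by simp
  hence z1: "- exp (-1) \<le> z" unfolding z_def by simp
  have z2: "z < 0" unfolding z_def by simp
  define w where "w = lambert_W0 z"
  have w1: "w \<ge> -1" and w2: "w * exp w = z" using W0_prop[OF z1] z2 unfolding w_def by auto
  have wneg: "w < 0"
  proof (rule ccontr)
    assume "\<not> w < 0" hence "w * exp w \<ge> 0" by simp
    thus False using w2 z2 by simp
  qed
  define u where "u = - w"
  have u0: "u > 0" and u1: "u \<le> 1" using wneg w1 u_def by auto
  have "u * exp (- u) = exp (-1 - D / a)" using w2 unfolding z_def u_def by simp
  hence "ln (u * exp (- u)) = -1 - D / a" by simp
  hence phiu: "u - ln u = 1 + D / a" using u0 by (simp add: ln_mult)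
  have "b \<ge> a * u"
  proof (rule ccontr)
    assume "\<not> b \<ge> a * u"
    hence bl: "b < a * u" by simp
    define s where "s = b / a"
    have b0: "b > 0" using j ypos by simp
    have s0: "s > 0" using b0 a0 s_def by simp
    have su: "s < u" using bl a0 s_def by (simp add: divide_less_eq mult.commute)
    have "s - ln s > u - ln u" by (rule phi_strict[OF s0 su u1])
    hence "a * (s - ln s) > a * (1 + D / a)" using phiu a0 by simp
    hence gt: "a * (s - ln s) > a + D" using a0 by (simp add: distrib_left)
    have ba: "b \<le> a" using bl u1 a0 by (smt (verit) mult_left_le)
    have ki: "b - a - a * ln (b / a) \<le> x $ j * ln (x $ j / b) - x $ j + b"
      by (rule key_ineq[OF b0 ba ale[of j]])
    have "a * s = b" using s_def a0 by simp
    hence "a * (s - ln s) = b - a * ln (b / a)" using s_def by (simp add: right_diff_distrib)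
    hence "a * (s - ln s) - a \<le> dd j" using ki j unfolding dd_def by simp
    thus False using gt Dj by simp
  qed
  thus ?thesis unfolding a_def[symmetric] b_def[symmetric] rD u_def w_def z_def by simp
qed

end
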